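(* Let $\mathcal{G}=(\mathcal{N},\mathcal{E})$ be a finite simple undirected graph with vertex set $\mathcal{N}=\{1,\dots,N\}$. Let $\mathbb{T}^N=(\mathbb{R}/2\pi\mathbb{Z})^N$ and $$\mathbb{T}^N_0(\mathcal{G}):=\{\theta=(\theta_1,\dots,\theta_N)\in\mathbb{T}^N:\ \theta_i\neq\theta_j \text{ for all } \{i,j\}\in\mathcal{E}\},$$ and let $R_0(\mathcal{G})$ denote the number of connected components of $\mathbb{T}^N_0(\mathcal{G})$. Then: (i) if $\mathcal{G}=T$ is a tree on $N\ge 1$ vertices, $R_0(T)=1$; (ii) if $\mathcal{G}=C_N$ is the cycle graph on $N\ge 3$ vertices, $R_0(C_N)=N-1$.
   Context: $\mathbb{T}^N_0(\mathcal{G})$ is the configuration space of $N$ agents on the circle in which agents joined by an edge of $\mathcal{G}$ never coincide (the region left forward-invariant by repulsive couplings with barriers at zero separation). The cycle graph $C_N$ has edges $\{k,k+1\}$ for $k=1,\dots,N-1$ and $\{N,1\}$. *)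

theory Defs
  imports "HOL-Analysis.Analysis"
begin

text \<open>The circle R/2piZ is represented by the unit circle in the complex plane
  (via theta maps to exp(i theta), a homeomorphism).\<close>

definition torus :: "nat \<Rightarrow> (nat \<Rightarrow> complex) topology" where
  "torus N = product_topology (\<lambda>i. top_of_set (sphere (0::complex) 1)) {1..N}"

definition simple_graph :: "nat \<Rightarrow> nat set set \<Rightarrow> bool" where
  "simple_graph N E \<longleftrightarrow>
     (\<forall>e\<in>E. \<exists>i j. e = {i, j} \<and> i \<noteq> j \<and> i \<in> {1..N} \<and> j \<in> {1..N})"

definition graph_connected :: "nat \<Rightarrow> nat set set \<Rightarrow> bool" where
  "graph_connected N E \<longleftrightarrow>
     (\<forall>i\<in>{1..N}. \<forall>j\<in>{1..N}. (i, j) \<in> {(a, b). {a, b} \<in> E}\<^sup>*)"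

definition has_cycle :: "nat set set \<Rightarrow> bool" where
  "has_cycle E \<longleftrightarrow>
     (\<exists>vs. length vs \<ge> 3 \<and> distinct vs \<and>
        (\<forall>k. k + 1 < length vs \<longrightarrow> {vs ! k, vs ! (k + 1)} \<in> E) \<and>
        {last vs, hd vs} \<in> E)"

definition is_tree :: "nat \<Rightarrow> nat set set \<Rightarrow> bool" where
  "is_tree N E \<longleftrightarrow> simple_graph N E \<and> graph_connected N E \<and> \<not> has_cycle E"

definition cycle_graph :: "nat \<Rightarrow> nat set set" where
  "cycle_graph N = {{k, k + 1} | k. 1 \<le> k \<and> k < N} \<union> {{N, 1}}"

definition config0 :: "nat \<Rightarrow> nat set set \<Rightarrow> (nat \<Rightarrow> complex) set" where
  "config0 N E = {\<theta> \<in> topspace (torus N). \<forall>i j. {i, j} \<in> E \<longrightarrow> \<theta> i \<noteq> \<theta> j}"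

definition R0 :: "nat \<Rightarrow> nat set set \<Rightarrow> nat" where
  "R0 N E = card (connected_components_of (subtopology (torus N) (config0 N E)))"

end

theory Submission
  imports Defs
begin

lemma cm_mult:
  fixes f g :: "'a \<Rightarrow> 'b::real_normed_algebra"
  shows "continuous_map X euclidean f \<Longrightarrow> continuous_map X euclidean g \<Longrightarrow> continuous_map X euclidean (\<lambda>x. f x * g x)"
  by (simp add: continuous_map_atin tendsto_mult)

lemma cm_isCont:
  assumes "continuous_map X euclidean f" "\<And>x. x \<in> topspace X \<Longrightarrow> isCont g (f x)"
  shows "continuous_map X euclidean (\<lambda>x. g (f x))"
  using assms by (auto simp: continuous_map_atin intro: isCont_tendsto_compose)

lemma topspace_torus: "topspace (torus N) = PiE {1..N} (\<lambda>_. sphere 0 1)"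
  by (simp add: torus_def topspace_product_topology)

lemma cm_coord:
  assumes "k \<in> {1..N}"
  shows "continuous_map (subtopology (torus N) S) euclidean (\<lambda>\<theta>. \<theta> k)"
proof -
  have "continuous_map (torus N) (top_of_set (sphere 0 1)) (\<lambda>\<theta>. \<theta> k)"
    unfolding torus_def using assms by (rule continuous_map_product_projection)
  then show ?thesis
    by (meson continuous_map_from_subtopology continuous_map_into_fulltopology)
qed

lemma unit_exp_Arg2pi: "norm r = 1 \<Longrightarrow> exp (\<i> * of_real (Arg2pi r)) = r"
  using Arg2pi[of r] unfolding is_Arg_def by simp

lemma Arg2pi_exp_real: "0 \<le> x \<Longrightarrow> x < 2*pi \<Longrightarrow> Arg2pi (exp (\<i> * of_real x)) = x"
  by (subst Arg2pi_exp) auto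

lemma Arg2pi_pos: "norm r = 1 \<Longrightarrow> r \<noteq> 1 \<Longrightarrow> 0 < Arg2pi r"
  by (metis Arg2pi less_eq_real_def mult_zero_right mult_zero_left of_real_0 exp_zero unit_exp_Arg2pi)

lemma exp_ne1: "0 < x \<Longrightarrow> x < 2*pi \<Longrightarrow> exp (\<i> * of_real x) \<noteq> 1"
  by (metis Arg2pi_exp_real Arg2pi_eq_0 Reals_1 less_eq_real_def one_complex.sel(1) zero_le_one order_less_irrefl)

lemma unit_cnj: "norm z = 1 \<Longrightarrow> z * cnj z = 1"
  by (metis complex_norm_square mult.commute norm_one of_real_1 power_one)

lemma unit_ratio_ne1: "norm x = 1 \<Longrightarrow> norm y = 1 \<Longrightarrow> y \<noteq> x \<Longrightarrow> y * cnj x \<noteq> 1"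
  by (metis mult.assoc mult.commute mult.right_neutral unit_cnj)


lemma count_components:
  fixes f :: "'a \<Rightarrow> real"
  assumes cont: "continuous_map X euclideanreal f"
    and fin: "finite V" and sub: "f ` topspace X \<subseteq> V"
    and fib: "\<And>v. v \<in> V \<Longrightarrow> connectedin X {x \<in> topspace X. f x = v}"
    and ne: "\<And>v. v \<in> V \<Longrightarrow> \<exists>x\<in>topspace X. f x = v"
  shows "card (connected_components_of X) = card V"
proof -
  define g where "g v = {x \<in> topspace X. f x = v}" for v
  have A: "\<exists>v\<in>V. C = g v" if C: "C \<in> connected_components_of X" for C
  proof -
    have Cne: "C \<noteq> {}" using C nonempty_connected_components_of by blast
    have Cc: "connectedin X C" using C connectedin_connected_components_of by blast
    have Ct: "C \<subseteq> topspace X" using C connected_components_of_subset by blast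
    have "connected (f ` C)"
      using connectedin_continuous_map_image[OF cont Cc] by simp
    moreover have "finite (f ` C)" using sub Ct fin by (meson finite_subset image_mono order_trans)
    ultimately obtain v where v: "f ` C = {v}" using Cne connected_finite_iff_sing by blast
    then have vV: "v \<in> V" using sub Ct by blast
    have "C \<subseteq> g v" using v Ct unfolding g_def by blast
    moreover have "g v \<subseteq> C"
    proof (rule connected_components_of_maximal[OF C])
      show "connectedin X (g v)" using fib[OF vV] g_def by simp
      show "\<not> disjnt C (g v)" using \<open>C \<subseteq> g v\<close> Cne unfolding disjnt_def by blast
    qed
    ultimately show ?thesis using vV by blast
  qed
  have B: "g v \<in> connected_components_of X" if vV: "v \<in> V" for v
  proof -
    obtain x where x: "x \<in> topspace X" "f x = v" using ne[OF vV] by blast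
    have cc: "connected_component_of_set X x \<in> connected_components_of X"
      using x(1) by (simp add: connected_component_in_connected_components_of)
    obtain v' where v': "v' \<in> V" "connected_component_of_set X x = g v'" using A[OF cc] by blast
    have "x \<in> connected_component_of_set X x" using x(1) by (simp add: connected_component_of_refl)
    then have "x \<in> g v'" using v'(2) by simp
    then have "v' = v" using x unfolding g_def by simp
    then show ?thesis using cc v' by simp
  qed
  have eq: "connected_components_of X = g ` V" using A B by blast
  have "inj_on g V"
  proof (rule inj_onI)
    fix v w assume "v \<in> V" "w \<in> V" "g v = g w"
    then show "v = w" using ne[of v] unfolding g_def by auto
  qed
  then show ?thesis using eq card_image by simp
qed


definition nxt :: "nat \<Rightarrow> nat \<Rightarrow> nat" where "nxt N k = (if k = N then 1 else Suc k)"
definition ang :: "nat \<Rightarrow> (nat \<Rightarrow> complex) \<Rightarrow> nat \<Rightarrow> real" where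
  "ang N \<theta> k = Arg2pi (\<theta> (nxt N k) * cnj (\<theta> k))"
definition wnd :: "nat \<Rightarrow> (nat \<Rightarrow> complex) \<Rightarrow> real" where
  "wnd N \<theta> = (\<Sum>k=1..N. ang N \<theta> k)"
definition Pt :: "nat \<Rightarrow> complex \<Rightarrow> (nat \<Rightarrow> real) \<Rightarrow> (nat \<Rightarrow> complex)" where
  "Pt N z \<beta> = (\<lambda>k\<in>{1..N}. z * exp (\<i> * of_real (\<Sum>j=1..<k. \<beta> j)))"

lemma nxt_in: "k \<in> {1..N} \<Longrightarrow> nxt N k \<in> {1..N}"
  by (auto simp: nxt_def)

lemma cyc_edges: "N \<ge> 1 \<Longrightarrow> cycle_graph N = (\<lambda>k. {k, nxt N k}) ` {1..N}"
proof
  assume N: "N \<ge> 1"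
  show "cycle_graph N \<subseteq> (\<lambda>k. {k, nxt N k}) ` {1..N}"
  proof
    fix e assume "e \<in> cycle_graph N"
    then consider k where "e = {k, k+1}" "1 \<le> k" "k < N" | "e = {N, 1}" unfolding cycle_graph_def by blast
    then show "e \<in> (\<lambda>k. {k, nxt N k}) ` {1..N}"
    proof cases
      case 1 then show ?thesis by (intro image_eqI[of _ _ k]) (auto simp: nxt_def)
    next
      case 2 then show ?thesis using N by (intro image_eqI[of _ _ N]) (auto simp: nxt_def)
    qed
  qed
  show "(\<lambda>k. {k, nxt N k}) ` {1..N} \<subseteq> cycle_graph N"
  proof
    fix e assume "e \<in> (\<lambda>k. {k, nxt N k}) ` {1..N}"
    then obtain k where k: "k \<in> {1..N}" "e = {k, nxt N k}" by blast
    show "e \<in> cycle_graph N"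
    proof (cases "k = N")
      case True then show ?thesis using k unfolding cycle_graph_def nxt_def by auto
    next
      case False then show ?thesis using k unfolding cycle_graph_def nxt_def by auto
    qed
  qed
qed

lemma config_cyc: "N \<ge> 1 \<Longrightarrow> config0 N (cycle_graph N) =
   {\<theta> \<in> topspace (torus N). \<forall>k\<in>{1..N}. \<theta> (nxt N k) \<noteq> \<theta> k}"
proof -
  assume N: "N \<ge> 1"
  have "(\<forall>i j. {i, j} \<in> (\<lambda>k. {k, nxt N k}) ` {1..N} \<longrightarrow> \<theta> i \<noteq> \<theta> j) \<longleftrightarrow>
        (\<forall>k\<in>{1..N}. \<theta> (nxt N k) \<noteq> \<theta> k)" for \<theta> :: "nat \<Rightarrow> complex"
  proof
    assume L: "\<forall>i j. {i, j} \<in> (\<lambda>k. {k, nxt N k}) ` {1..N} \<longrightarrow> \<theta> i \<noteq> \<theta> j"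
    show "\<forall>k\<in>{1..N}. \<theta> (nxt N k) \<noteq> \<theta> k"
    proof
      fix k assume "k \<in> {1..N}"
      then have "{nxt N k, k} \<in> (\<lambda>k. {k, nxt N k}) ` {1..N}" by (auto simp: insert_commute)
      then show "\<theta> (nxt N k) \<noteq> \<theta> k" using L by blast
    qed
  next
    assume R: "\<forall>k\<in>{1..N}. \<theta> (nxt N k) \<noteq> \<theta> k"
    show "\<forall>i j. {i, j} \<in> (\<lambda>k. {k, nxt N k}) ` {1..N} \<longrightarrow> \<theta> i \<noteq> \<theta> j"
    proof (intro allI impI)
      fix i j assume "{i, j} \<in> (\<lambda>k. {k, nxt N k}) ` {1..N}"
      then obtain k where k: "k \<in> {1..N}" "{i, j} = {k, nxt N k}" by blast
      then have "(i = k \<and> j = nxt N k) \<or> (i = nxt N k \<and> j = k)" by (simp add: doubleton_eq_iff)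
      then show "\<theta> i \<noteq> \<theta> j" using R k(1) by metis
    qed
  qed
  then show ?thesis unfolding config0_def cyc_edges[OF N] by simp
qed

lemma exp_ratio: "exp (\<i> * of_real a) * cnj (exp (\<i> * of_real b)) = exp (\<i> * of_real (a - b))"
proof -
  have "cnj (exp (\<i> * of_real b)) = exp (-(\<i> * of_real b))" by (simp add: exp_cnj)
  then show ?thesis by (simp add: mult_exp_exp algebra_simps)
qed

lemma exp_2pim: "exp (\<i> * of_real (2*pi*real m)) = 1"
  by (subst exp_eq_1) (auto intro!: exI[of _ "int m"])


lemma sum_last: "(N::nat) \<ge> 1 \<Longrightarrow> (\<Sum>j=1..N. f j) = (\<Sum>j=1..<N. f j) + (f N :: 'a::comm_monoid_add)"
  using sum.atLeastLessThan_Suc[of 1 N f] by (simp add: atLeastLessThanSuc_atLeastAtMost)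

lemma Pt_ratio:
  assumes N: "N \<ge> 1" and z: "norm z = 1" and k: "k \<in> {1..N}"
    and v: "(\<Sum>j=1..N. \<beta> j) = 2*pi*real m"
  shows "Pt N z \<beta> (nxt N k) * cnj (Pt N z \<beta> k) = exp (\<i> * of_real (\<beta> k))"
proof (cases "k = N")
  case True
  have "(\<Sum>j=1..<N. \<beta> j) = 2*pi*real m - \<beta> N"
    using v N sum_last[OF N, of \<beta>] by simp
  then have p: "Pt N z \<beta> N = z * exp (\<i> * of_real (2*pi*real m - \<beta> N))"
    using N by (simp add: Pt_def del: of_real_sum)
  have p1: "Pt N z \<beta> 1 = z * exp (\<i> * of_real 0)" using N by (simp add: Pt_def)
  have "Pt N z \<beta> (nxt N k) * cnj (Pt N z \<beta> k) = z * cnj z * (exp (\<i> * of_real 0) * cnj (exp (\<i> * of_real (2*pi*real m - \<beta> N))))"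
  proof -
    have "nxt N k = 1" using True by (simp add: nxt_def)
    then have "Pt N z \<beta> (nxt N k) * cnj (Pt N z \<beta> k) = (z * exp (\<i> * of_real 0)) * cnj (z * exp (\<i> * of_real (2*pi*real m - \<beta> N)))"
      using True p p1 by (simp only:)
    then show ?thesis by (simp only: complex_cnj_mult mult_ac)
  qed
  also have "\<dots> = exp (\<i> * of_real (\<beta> N)) * cnj (exp (\<i> * of_real (2*pi*real m)))"
    by (simp only: unit_cnj[OF z] exp_ratio) simp
  also have "\<dots> = exp (\<i> * of_real (\<beta> N))" by (simp only: exp_2pim) simp
  finally show ?thesis using True by simp
next
  case False
  then have nk: "nxt N k = Suc k" "Suc k \<in> {1..N}" using k by (auto simp: nxt_def)
  have s: "(\<Sum>j=1..<Suc k. \<beta> j) = (\<Sum>j=1..<k. \<beta> j) + \<beta> k" using k by simp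
  have "Pt N z \<beta> (nxt N k) * cnj (Pt N z \<beta> k) = z * cnj z * (exp (\<i> * of_real ((\<Sum>j=1..<k. \<beta> j) + \<beta> k)) * cnj (exp (\<i> * of_real (\<Sum>j=1..<k. \<beta> j))))"
    using nk k s by (simp add: Pt_def del: of_real_sum)
  also have "\<dots> = exp (\<i> * of_real (\<beta> k))"
    by (simp only: unit_cnj[OF z] exp_ratio) simp
  finally show ?thesis .
qed

lemma Pt_props:
  assumes N: "N \<ge> 1" and z: "norm z = 1"
    and b: "\<And>j. j \<in> {1..N} \<Longrightarrow> 0 < \<beta> j \<and> \<beta> j < 2*pi"
    and v: "(\<Sum>j=1..N. \<beta> j) = 2*pi*real m"
  shows "Pt N z \<beta> \<in> config0 N (cycle_graph N)" "wnd N (Pt N z \<beta>) = 2*pi*real m"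
proof -
  have ts: "Pt N z \<beta> \<in> topspace (torus N)"
    using z by (auto simp: topspace_torus Pt_def norm_mult)
  have r: "\<And>k. k \<in> {1..N} \<Longrightarrow> Pt N z \<beta> (nxt N k) * cnj (Pt N z \<beta> k) = exp (\<i> * of_real (\<beta> k))"
    using Pt_ratio[OF N z _ v] by blast
  show "Pt N z \<beta> \<in> config0 N (cycle_graph N)"
    unfolding config_cyc[OF N]
  proof (intro CollectI conjI ts ballI notI)
    fix k assume k: "k \<in> {1..N}" and eq: "Pt N z \<beta> (nxt N k) = Pt N z \<beta> k"
    have "norm (Pt N z \<beta> k) = 1" using ts k by (auto simp: topspace_torus)
    then have "exp (\<i> * of_real (\<beta> k)) = 1" using r[OF k] eq unit_cnj by simp
    then show False using exp_ne1 b[OF k] by blast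
  qed
  have "wnd N (Pt N z \<beta>) = (\<Sum>k=1..N. \<beta> k)"
    unfolding wnd_def ang_def
    by (rule sum.cong[OF refl]) (simp add: r Arg2pi_exp_real b less_imp_le)
  then show "wnd N (Pt N z \<beta>) = 2*pi*real m" using v by simp
qed


lemma cfg_facts:
  assumes N: "N \<ge> 1" and th: "\<theta> \<in> config0 N (cycle_graph N)"
  shows "\<theta> \<in> PiE {1..N} (\<lambda>_. sphere 0 1)" "\<And>k. k \<in> {1..N} \<Longrightarrow> norm (\<theta> k) = 1"
    "\<And>k. k \<in> {1..N} \<Longrightarrow> \<theta> (nxt N k) \<noteq> \<theta> k"
  using th unfolding config_cyc[OF N] topspace_torus by auto

lemma ang_bounds:
  assumes N: "N \<ge> 1" and th: "\<theta> \<in> config0 N (cycle_graph N)" and k: "k \<in> {1..N}"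
  shows "0 < ang N \<theta> k" "ang N \<theta> k < 2*pi"
proof -
  have n1: "norm (\<theta> k) = 1" "norm (\<theta> (nxt N k)) = 1" using cfg_facts[OF N th] k nxt_in by auto
  have "norm (\<theta> (nxt N k) * cnj (\<theta> k)) = 1" using n1 by (simp add: norm_mult)
  moreover have "\<theta> (nxt N k) * cnj (\<theta> k) \<noteq> 1" using unit_ratio_ne1 n1 cfg_facts(3)[OF N th k] by blast
  ultimately show "0 < ang N \<theta> k" unfolding ang_def using Arg2pi_pos by blast
  show "ang N \<theta> k < 2*pi" unfolding ang_def using Arg2pi by blast
qed

lemma ang_step:
  assumes N: "N \<ge> 1" and th: "\<theta> \<in> config0 N (cycle_graph N)" and k: "k \<in> {1..N}"
  shows "\<theta> (nxt N k) = \<theta> k * exp (\<i> * of_real (ang N \<theta> k))"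
proof -
  have n1: "norm (\<theta> k) = 1" "norm (\<theta> (nxt N k)) = 1" using cfg_facts[OF N th] k nxt_in by auto
  have "norm (\<theta> (nxt N k) * cnj (\<theta> k)) = 1" using n1 by (simp add: norm_mult)
  then have "exp (\<i> * of_real (ang N \<theta> k)) = \<theta> (nxt N k) * cnj (\<theta> k)"
    unfolding ang_def by (rule unit_exp_Arg2pi)
  then have "\<theta> k * exp (\<i> * of_real (ang N \<theta> k)) = \<theta> (nxt N k) * (\<theta> k * cnj (\<theta> k))"
    by (simp add: mult_ac)
  also have "\<dots> = \<theta> (nxt N k)" using unit_cnj[OF n1(1)] by simp
  finally show ?thesis by simp
qed

lemma recon_k:
  assumes N: "N \<ge> 1" and th: "\<theta> \<in> config0 N (cycle_graph N)"
  shows "k \<in> {1..N} \<Longrightarrow> \<theta> k = \<theta> 1 * exp (\<i> * of_real (\<Sum>j=1..<k. ang N \<theta> j))"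
proof (induction k)
  case 0 then show ?case by simp
next
  case (Suc k)
  show ?case
  proof (cases "k = 0")
    case True then show ?thesis by simp
  next
    case False
    then have k: "k \<in> {1..N}" "k \<noteq> N" using Suc.prems by auto
    then have nk: "nxt N k = Suc k" by (simp add: nxt_def)
    have "\<theta> (Suc k) = \<theta> k * exp (\<i> * of_real (ang N \<theta> k))" using ang_step[OF N th k(1)] nk by simp
    also have "\<dots> = \<theta> 1 * (exp (\<i> * of_real (\<Sum>j=1..<k. ang N \<theta> j)) * exp (\<i> * of_real (ang N \<theta> k)))"
      using Suc.IH[OF k(1)] by (simp add: mult_ac)
    also have "\<dots> = \<theta> 1 * exp (\<i> * of_real ((\<Sum>j=1..<k. ang N \<theta> j) + ang N \<theta> k))"
      by (simp only: mult_exp_exp distrib_left of_real_add)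
    also have "(\<Sum>j=1..<k. ang N \<theta> j) + ang N \<theta> k = (\<Sum>j=1..<Suc k. ang N \<theta> j)"
      using k by simp
    finally show ?thesis .
  qed
qed

lemma recon:
  assumes N: "N \<ge> 1" and th: "\<theta> \<in> config0 N (cycle_graph N)"
  shows "Pt N (\<theta> 1) (ang N \<theta>) = \<theta>"
proof
  fix k show "Pt N (\<theta> 1) (ang N \<theta>) k = \<theta> k"
  proof (cases "k \<in> {1..N}")
    case True then show ?thesis using recon_k[OF N th True] by (simp add: Pt_def)
  next
    case False
    have "\<theta> k = undefined" using cfg_facts(1)[OF N th] False by (simp add: PiE_def extensional_def)
    then show ?thesis using False by (auto simp: Pt_def)
  qed
qed

lemma wnd_val:
  assumes N: "N \<ge> 1" and th: "\<theta> \<in> config0 N (cycle_graph N)"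
  shows "\<exists>m::nat. 1 \<le> m \<and> m \<le> N - 1 \<and> wnd N \<theta> = 2*pi*real m"
proof -
  have NN: "N \<in> {1..N}" using N by simp
  have "\<theta> 1 = \<theta> N * exp (\<i> * of_real (ang N \<theta> N))"
    using ang_step[OF N th NN] by (simp add: nxt_def)
  also have "\<dots> = \<theta> 1 * (exp (\<i> * of_real (\<Sum>j=1..<N. ang N \<theta> j)) * exp (\<i> * of_real (ang N \<theta> N)))"
    using recon_k[OF N th NN] by (simp add: mult_ac)
  also have "\<dots> = \<theta> 1 * exp (\<i> * of_real ((\<Sum>j=1..<N. ang N \<theta> j) + ang N \<theta> N))"
    by (simp only: mult_exp_exp distrib_left of_real_add)
  also have "(\<Sum>j=1..<N. ang N \<theta> j) + ang N \<theta> N = wnd N \<theta>"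
    unfolding wnd_def using sum_last[OF N, of "ang N \<theta>"] by simp
  finally have e: "\<theta> 1 = \<theta> 1 * exp (\<i> * of_real (wnd N \<theta>))" .
  have "norm (\<theta> 1) = 1" using cfg_facts(2)[OF N th] N by simp
  then have "\<theta> 1 \<noteq> 0" by auto
  then have "exp (\<i> * of_real (wnd N \<theta>)) = 1" using e by (metis mult_cancel_left1)
  then obtain n :: int where n: "wnd N \<theta> = of_int (2 * n) * pi" by (auto simp: exp_eq_1)
  have pos: "0 < wnd N \<theta>" unfolding wnd_def
    by (rule sum_pos) (use N ang_bounds[OF N th] in auto)
  have "wnd N \<theta> < (\<Sum>k=1..N. 2*pi)" unfolding wnd_def
    by (rule sum_strict_mono) (use N ang_bounds[OF N th] in auto)
  then have up: "wnd N \<theta> < 2*pi*real N" by (simp add: mult_ac)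
  have "0 < n" using pos n pi_gt_zero by (simp add: zero_less_mult_iff)
  moreover have "n < int N" using up n pi_gt_zero by (simp add: mult.commute)
  ultimately show ?thesis using n by (intro exI[of _ "nat n"]) auto
qed


lemma cm_cnj:
  "continuous_map X euclidean f \<Longrightarrow> continuous_map X euclidean (\<lambda>x. cnj (f x))"
  by (simp add: continuous_map_atin tendsto_cnj)

lemma conv_lo: "0 \<le> t \<Longrightarrow> t \<le> 1 \<Longrightarrow> lo < a \<Longrightarrow> lo < b \<Longrightarrow> lo < (1-t)*a + t*(b::real)"
proof -
  assume t: "0 \<le> t" "t \<le> 1" and ab: "lo < a" "lo < b"
  have "(1-t)*a + t*b - lo = (1-t)*(a-lo) + t*(b-lo)" by (simp add: algebra_simps)
  moreover have "(1-t)*(a-lo) + t*(b-lo) > 0"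
  proof (cases "t = 0")
    case True then show ?thesis using ab by simp
  next
    case False
    then have "t*(b-lo) > 0" using t ab by simp
    moreover have "(1-t)*(a-lo) \<ge> 0" using t ab by simp
    ultimately show ?thesis by linarith
  qed
  ultimately show ?thesis by linarith
qed

lemma conv_hi: "0 \<le> t \<Longrightarrow> t \<le> 1 \<Longrightarrow> a < hi \<Longrightarrow> b < hi \<Longrightarrow> (1-t)*a + t*(b::real) < hi"
  using conv_lo[of t "-hi" "-a" "-b"] by (simp add: algebra_simps)

lemma topspace_X: "topspace (subtopology (torus N) (config0 N E)) = config0 N E"
  by (auto simp: config0_def)

lemma wnd_cont:
  assumes N: "N \<ge> 1"
  shows "continuous_map (subtopology (torus N) (config0 N (cycle_graph N))) euclideanreal (wnd N)"
  unfolding wnd_def[abs_def]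
proof (rule continuous_map_sum)
  fix k assume k: "k \<in> {1..N}"
  let ?X = "subtopology (torus N) (config0 N (cycle_graph N))"
  have "continuous_map ?X euclidean (\<lambda>\<theta>. \<theta> (nxt N k) * cnj (\<theta> k))"
    by (intro cm_mult cm_cnj cm_coord k nxt_in)
  then show "continuous_map ?X euclidean (\<lambda>\<theta>. ang N \<theta> k)"
    unfolding ang_def
  proof (rule cm_isCont)
    fix \<theta> assume "\<theta> \<in> topspace ?X"
    then have th: "\<theta> \<in> config0 N (cycle_graph N)" by (simp add: topspace_X)
    have "0 < Arg2pi (\<theta> (nxt N k) * cnj (\<theta> k))" using ang_bounds(1)[OF N th k] by (simp add: ang_def)
    then have "\<theta> (nxt N k) * cnj (\<theta> k) \<notin> \<real>\<^sub>\<ge>\<^sub>0"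
      using Arg2pi_eq_0 complex_nonneg_Reals_iff complex_is_Real_iff by (metis less_irrefl)
    then show "isCont Arg2pi (\<theta> (nxt N k) * cnj (\<theta> k))" by (rule continuous_at_Arg2pi)
  qed
qed simp


lemma fiber_pc:
  assumes N: "N \<ge> 1"
  shows "connectedin (subtopology (torus N) (config0 N (cycle_graph N)))
           {\<theta> \<in> topspace (subtopology (torus N) (config0 N (cycle_graph N))). wnd N \<theta> = 2*pi*real m}"
proof -
  let ?S0 = "config0 N (cycle_graph N)"
  let ?X = "subtopology (torus N) ?S0"
  let ?F = "{\<theta> \<in> topspace ?X. wnd N \<theta> = 2*pi*real m}"
  have "path_connectedin ?X ?F"
    unfolding path_connectedin
  proof (intro conjI ballI)
    show "?F \<subseteq> topspace ?X" by blast
    fix \<theta> \<theta>' assume a: "\<theta> \<in> ?F" and b: "\<theta>' \<in> ?F"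
    have th: "\<theta> \<in> ?S0" and th': "\<theta>' \<in> ?S0" using a b by (auto simp: topspace_X)
    have w: "wnd N \<theta> = 2*pi*real m" "wnd N \<theta>' = 2*pi*real m" using a b by auto
    define A where "A = Arg2pi (\<theta>' 1 * cnj (\<theta> 1))"
    define zt where "zt t = \<theta> 1 * exp (\<i> * of_real (t * A))" for t :: real
    define bt where "bt t j = (1-t) * ang N \<theta> j + t * ang N \<theta>' j" for t :: real and j
    define g where "g t = Pt N (zt t) (bt t)" for t
    have n1: "norm (\<theta> 1) = 1" "norm (\<theta>' 1) = 1" using cfg_facts(2)[OF N th] cfg_facts(2)[OF N th'] N by auto
    have nz: "norm (zt t) = 1" for t using n1 by (simp add: zt_def norm_mult)
    have inF: "g t \<in> ?S0 \<and> wnd N (g t) = 2*pi*real m" if t: "t \<in> {0..1}" for t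
    proof -
      have bb: "0 < bt t j \<and> bt t j < 2*pi" if j: "j \<in> {1..N}" for j
        unfolding bt_def using t ang_bounds[OF N th j] ang_bounds[OF N th' j]
        by (auto intro!: conv_lo conv_hi)
      have "(\<Sum>j=1..N. bt t j) = (1-t) * wnd N \<theta> + t * wnd N \<theta>'"
        unfolding bt_def wnd_def by (simp add: sum.distrib sum_distrib_left)
      also have "\<dots> = 2*pi*real m" using w by (simp add: algebra_simps)
      finally have s: "(\<Sum>j=1..N. bt t j) = 2*pi*real m" .
      show ?thesis unfolding g_def using Pt_props[OF N nz bb s] by blast
    qed
    have cont: "continuous_map (top_of_set {0..1}) (torus N) g"
      unfolding torus_def continuous_map_componentwise
    proof (intro conjI ballI)
      show "g ` topspace (top_of_set {0..1}) \<subseteq> extensional {1..N}"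
        by (auto simp: g_def Pt_def)
      fix k assume k: "k \<in> {1..N}"
      have "continuous_on {0..1} (\<lambda>t. zt t * exp (\<i> * of_real (\<Sum>j=1..<k. bt t j)))"
        unfolding zt_def bt_def by (intro continuous_intros)
      moreover have "(\<lambda>t. g t k) = (\<lambda>t. zt t * exp (\<i> * of_real (\<Sum>j=1..<k. bt t j)))"
        using k by (simp add: g_def Pt_def)
      ultimately have "continuous_map (top_of_set {0..1}) euclidean (\<lambda>t. g t k)" by simp
      moreover have "(\<lambda>t. g t k) ` topspace (top_of_set {0..1}) \<subseteq> sphere 0 1"
        using k nz by (auto simp: g_def Pt_def norm_mult)
      ultimately show "continuous_map (top_of_set {0..1}) (top_of_set (sphere 0 1)) (\<lambda>t. g t k)"
        by (auto simp: continuous_map_in_subtopology)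
    qed
    show "\<exists>g. pathin ?X g \<and> g \<in> {0..1} \<rightarrow> ?F \<and> g 0 = \<theta> \<and> g 1 = \<theta>'"
    proof (intro exI conjI)
      have "g \<in> {0..1} \<rightarrow> ?S0" using inF by blast
      then show "pathin ?X g" unfolding pathin_def
        by (intro continuous_map_into_subtopology cont) simp
      show "g \<in> {0..1} \<rightarrow> ?F" unfolding topspace_X using inF by blast
      have "zt 0 = \<theta> 1" by (simp add: zt_def)
      moreover have "bt 0 = ang N \<theta>" by (simp add: bt_def fun_eq_iff)
      ultimately show "g 0 = \<theta>" unfolding g_def using recon[OF N th] by simp
      have "zt 1 = \<theta> 1 * (\<theta>' 1 * cnj (\<theta> 1))"
        unfolding zt_def A_def using n1 by (simp add: unit_exp_Arg2pi norm_mult)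
      also have "\<dots> = \<theta>' 1" using unit_cnj[OF n1(1)] by (simp add: mult_ac)
      finally have "zt 1 = \<theta>' 1" .
      moreover have "bt 1 = ang N \<theta>'" by (simp add: bt_def fun_eq_iff)
      ultimately show "g 1 = \<theta>'" unfolding g_def using recon[OF N th'] by simp
    qed
  qed
  then show ?thesis by (rule path_connectedin_imp_connectedin)
qed

lemma cycle_count:
  assumes N: "N \<ge> 3"
  shows "R0 N (cycle_graph N) = N - 1"
proof -
  have N1: "N \<ge> 1" using N by simp
  let ?S0 = "config0 N (cycle_graph N)"
  let ?X = "subtopology (torus N) ?S0"
  define V where "V = (\<lambda>m::nat. 2*pi*real m) ` {1..N-1}"
  have cV: "card V = N - 1" unfolding V_def
    by (subst card_image) (auto simp: inj_on_def)
  have "card (connected_components_of ?X) = card V"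
  proof (rule count_components[OF wnd_cont[OF N1]])
    show "finite V" by (simp add: V_def)
    show "wnd N ` topspace ?X \<subseteq> V"
    proof
      fix v assume "v \<in> wnd N ` topspace ?X"
      then obtain \<theta> where th: "\<theta> \<in> ?S0" "v = wnd N \<theta>" by (auto simp: topspace_X)
      then show "v \<in> V" using wnd_val[OF N1 th(1)] unfolding V_def by auto
    qed
    fix v assume "v \<in> V"
    then obtain m where m: "m \<in> {1..N-1}" "v = 2*pi*real m" by (auto simp: V_def)
    show "connectedin ?X {x \<in> topspace ?X. wnd N x = v}" using fiber_pc[OF N1, of m] m by simp
    have bb: "0 < 2*pi*real m / real N \<and> 2*pi*real m / real N < 2*pi" if "j \<in> {1..N}" for j :: nat
      using m N by (auto simp: field_simps)
    have s: "(\<Sum>j=1..N. 2*pi*real m / real N) = 2*pi*real m" using N by simp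
    have "Pt N 1 (\<lambda>_. 2*pi*real m / real N) \<in> ?S0 \<and> wnd N (Pt N 1 (\<lambda>_. 2*pi*real m / real N)) = v"
      using Pt_props[OF N1 _ bb s] m by simp
    then show "\<exists>x\<in>topspace ?X. wnd N x = v" unfolding topspace_X by blast
  qed
  then show ?thesis unfolding R0_def cV .
qed


definition adj :: "nat set set \<Rightarrow> (nat \<times> nat) set" where "adj F = {(x, y). {x, y} \<in> F}"

lemma path_ex:
  assumes "(b, v) \<in> (adj F)\<^sup>*"
  shows "\<exists>vs. vs \<noteq> [] \<and> distinct vs \<and> hd vs = b \<and> last vs = v \<and>
           (\<forall>k. k + 1 < length vs \<longrightarrow> {vs ! k, vs ! (k + 1)} \<in> F)"
  using assms
proof (induction rule: rtrancl_induct)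
  case base
  show ?case by (intro exI[of _ "[b]"]) simp
next
  case (step u v)
  then obtain vs where vs: "vs \<noteq> []" "distinct vs" "hd vs = b" "last vs = u"
    "\<And>k. k + 1 < length vs \<Longrightarrow> {vs ! k, vs ! (k + 1)} \<in> F" by blast
  have uv: "{u, v} \<in> F" using step(2) by (simp add: adj_def)
  show ?case
  proof (cases "v \<in> set vs")
    case True
    then obtain i where i: "i < length vs" "vs ! i = v" by (auto simp: in_set_conv_nth)
    let ?ws = "take (Suc i) vs"
    have l: "length ?ws = Suc i" using i by simp
    show ?thesis
    proof (intro exI[of _ ?ws] conjI allI impI)
      show "?ws \<noteq> []" using vs(1) by simp
      show "distinct ?ws" using vs(2) by simp
      show "hd ?ws = b" using vs(1,3) by (simp add: hd_take)
      have "?ws \<noteq> []" using vs(1) by simp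
      then have "last ?ws = ?ws ! i" using l by (simp add: last_conv_nth)
      then show "last ?ws = v" using i by simp
      fix k assume "k + 1 < length ?ws"
      then have "k + 1 < Suc i" using l by simp
      then show "{?ws ! k, ?ws ! (k + 1)} \<in> F" using vs(5)[of k] i(1) by simp
    qed
  next
    case False
    let ?ws = "vs @ [v]"
    show ?thesis
    proof (intro exI[of _ ?ws] conjI allI impI)
      show "?ws \<noteq> []" by simp
      show "distinct ?ws" using vs(2) False by simp
      show "hd ?ws = b" using vs(1,3) by simp
      show "last ?ws = v" by simp
      fix k assume k: "k + 1 < length ?ws"
      show "{?ws ! k, ?ws ! (k + 1)} \<in> F"
      proof (cases "k + 1 < length vs")
        case True then show ?thesis using vs(5)[OF True] by (simp add: nth_append)
      next
        case False
        then have "k + 1 = length vs" using k by simp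
        moreover have "vs ! k = u" using vs(1,4) \<open>k + 1 = length vs\<close> by (metis add_diff_cancel_right' last_conv_nth)
        ultimately show ?thesis using uv by (simp add: nth_append)
      qed
    qed
  qed
qed

lemma no_back:
  assumes nc: "\<not> has_cycle (insert {a, b} F)" and nF: "{a, b} \<notin> F" and ab: "a \<noteq> b"
  shows "(b, a) \<notin> (adj F)\<^sup>*"
proof
  assume "(b, a) \<in> (adj F)\<^sup>*"
  then obtain vs where vs: "vs \<noteq> []" "distinct vs" "hd vs = b" "last vs = a"
    "\<And>k. k + 1 < length vs \<Longrightarrow> {vs ! k, vs ! (k + 1)} \<in> F" using path_ex by blast
  have "length vs \<noteq> 1"
  proof
    assume "length vs = 1"
    then have "hd vs = last vs" by (metis One_nat_def hd_conv_nth last_conv_nth vs(1) diff_Suc_1)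
    then show False using vs ab by simp
  qed
  moreover have "length vs \<noteq> 2"
  proof
    assume l: "length vs = 2"
    have "vs ! 0 = b" using vs(1,3) by (simp add: hd_conv_nth)
    moreover have "vs ! 1 = a" using vs(1,4) l by (simp add: last_conv_nth)
    moreover have "{vs ! 0, vs ! (0 + 1)} \<in> F" using vs(5) l by simp
    ultimately show False using nF by (simp add: insert_commute)
  qed
  moreover have "length vs \<noteq> 0" using vs(1) by simp
  ultimately have "length vs \<ge> 3" by linarith
  then have "has_cycle (insert {a, b} F)" unfolding has_cycle_def
    using vs by (intro exI[of _ vs]) (auto simp: insert_commute)
  then show False using nc by simp
qed


lemma cm_coord_t:
  assumes "k \<in> {1..N}"
  shows "continuous_map (torus N) euclidean (\<lambda>\<theta>. \<theta> k)"
  using cm_coord[OF assms, of "topspace (torus N)"] by simp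

lemma has_cycle_mono: "has_cycle F \<Longrightarrow> F \<subseteq> E \<Longrightarrow> has_cycle E"
  unfolding has_cycle_def by blast

lemma torus_conn: "connected_space (torus N)"
proof -
  have "connected_space (top_of_set (sphere (0::complex) 1))"
    using connectedin_iff_connected[of "sphere (0::complex) 1"] connected_sphere[of "0::complex" 1]
    by (simp add: connectedin_def)
  then show ?thesis unfolding torus_def connected_space_product_topology by simp
qed

lemma forest_step:
  assumes ih: "connectedin (torus N) (config0 N F)" "config0 N F \<noteq> {}"
    and sg: "simple_graph N (insert e F)" and nc: "\<not> has_cycle (insert e F)" and eF: "e \<notin> F"
  shows "connectedin (torus N) (config0 N (insert e F)) \<and> config0 N (insert e F) \<noteq> {}"
proof -
  obtain a b where e: "e = {a, b}" "a \<noteq> b" "a \<in> {1..N}" "b \<in> {1..N}"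
    using sg unfolding simple_graph_def by blast
  have sgF: "simple_graph N F" using sg by (simp add: simple_graph_def)
  define B where "B = {v. (b, v) \<in> (adj F)\<^sup>*}"
  have aB: "a \<notin> B" using no_back[of a b F] nc eF e unfolding B_def by simp
  have bB: "b \<in> B" unfolding B_def by simp
  have Bcl: "i \<in> B \<longleftrightarrow> j \<in> B" if "{i, j} \<in> F" for i j
  proof -
    have "(i, j) \<in> adj F" "(j, i) \<in> adj F" using that by (auto simp: adj_def insert_commute)
    then show ?thesis unfolding B_def using rtrancl_into_rtrancl[of b _ "adj F"] by blast
  qed
  define c where "c p = fst p a * cnj (fst p b) * exp (\<i> * of_real (snd p))" for p :: "(nat \<Rightarrow> complex) \<times> real"
  define \<Phi> where "\<Phi> p = (\<lambda>v\<in>{1..N}. if v \<in> B then fst p v * c p else fst p v)" for p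
  let ?Y = "prod_topology (torus N) euclideanreal"
  have normc: "norm (c p) = 1" if "fst p \<in> topspace (torus N)" for p
    using that e by (auto simp: c_def topspace_torus norm_mult PiE_iff)
  have cont0: "continuous_map ?Y (product_topology (\<lambda>i. top_of_set (sphere (0::complex) 1)) {1..N}) \<Phi>"
    unfolding continuous_map_componentwise
  proof (intro conjI ballI)
    show "\<Phi> ` topspace ?Y \<subseteq> extensional {1..N}" by (auto simp: \<Phi>_def)
    fix k assume k: "k \<in> {1..N}"
    have cc: "continuous_map ?Y euclidean c" unfolding c_def
    proof (intro cm_mult cm_cnj)
      show "continuous_map ?Y euclidean (\<lambda>p. fst p a)"
        using continuous_map_compose[OF continuous_map_fst cm_coord_t[OF e(3)]] by (simp add: o_def)
      show "continuous_map ?Y euclidean (\<lambda>p. fst p b)"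
        using continuous_map_compose[OF continuous_map_fst cm_coord_t[OF e(4)]] by (simp add: o_def)
      have "continuous_map ?Y euclideanreal snd" by (rule continuous_map_snd)
      then show "continuous_map ?Y euclidean (\<lambda>p. exp (\<i> * complex_of_real (snd p)))"
        by (rule cm_isCont) (intro continuous_intros)
    qed
    have ck: "continuous_map ?Y euclidean (\<lambda>p. fst p k)"
      using continuous_map_compose[OF continuous_map_fst cm_coord_t[OF k]] by (simp add: o_def)
    have "continuous_map ?Y euclidean (\<lambda>p. \<Phi> p k)"
    proof (cases "k \<in> B")
      case True
      then have "(\<lambda>p. \<Phi> p k) = (\<lambda>p. fst p k * c p)" using k by (simp add: \<Phi>_def fun_eq_iff)
      then show ?thesis using cm_mult[OF ck cc] by simp
    next
      case False
      then have "(\<lambda>p. \<Phi> p k) = (\<lambda>p. fst p k)" using k by (simp add: \<Phi>_def fun_eq_iff)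
      then show ?thesis using ck by simp
    qed
    moreover have "(\<lambda>p. \<Phi> p k) ` topspace ?Y \<subseteq> sphere 0 1"
    proof
      fix y assume "y \<in> (\<lambda>p. \<Phi> p k) ` topspace ?Y"
      then obtain p where p: "fst p \<in> topspace (torus N)" "y = \<Phi> p k" by auto
      have "norm (fst p k) = 1" using p(1) k by (auto simp: topspace_torus PiE_iff)
      then show "y \<in> sphere 0 1" using p k normc[OF p(1)] by (auto simp: \<Phi>_def norm_mult)
    qed
    ultimately show "continuous_map ?Y (top_of_set (sphere 0 1)) (\<lambda>p. \<Phi> p k)"
      by (auto simp: continuous_map_in_subtopology)
  qed
  then have cont: "continuous_map ?Y (torus N) \<Phi>" by (simp add: torus_def)
  have img: "\<Phi> ` (config0 N F \<times> {0<..<2*pi}) = config0 N (insert e F)"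
  proof
    show "\<Phi> ` (config0 N F \<times> {0<..<2*pi}) \<subseteq> config0 N (insert e F)"
    proof
      fix y assume "y \<in> \<Phi> ` (config0 N F \<times> {0<..<2*pi})"
      then obtain \<theta> t where th: "\<theta> \<in> config0 N F" and t: "0 < t" "t < 2*pi" and y: "y = \<Phi> (\<theta>, t)" by auto
      have thT: "\<theta> \<in> topspace (torus N)" and thF: "\<And>i j. {i, j} \<in> F \<Longrightarrow> \<theta> i \<noteq> \<theta> j"
        using th by (auto simp: config0_def)
      have nth: "\<And>k. k \<in> {1..N} \<Longrightarrow> norm (\<theta> k) = 1" using thT by (auto simp: topspace_torus PiE_iff)
      have nc1: "norm (c (\<theta>, t)) = 1" using normc thT by simp
      have yT: "y \<in> topspace (torus N)"
        using nth nc1 by (auto simp: y \<Phi>_def topspace_torus norm_mult)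
      have edge: "y i \<noteq> y j" if ij: "{i, j} \<in> insert e F" for i j
      proof (cases "{i, j} = e")
        case True
        then have "(i = a \<and> j = b) \<or> (i = b \<and> j = a)" using e by (auto simp: doubleton_eq_iff)
        moreover have "y a \<noteq> y b"
        proof -
          have ya: "y a = \<theta> a" using aB e(3) by (simp add: y \<Phi>_def)
          have "y b = \<theta> b * c (\<theta>, t)" using bB e(4) by (simp add: y \<Phi>_def)
          also have "\<dots> = \<theta> a * (\<theta> b * cnj (\<theta> b)) * exp (\<i> * of_real t)" by (simp add: c_def mult_ac)
          also have "\<dots> = \<theta> a * exp (\<i> * of_real t)" using unit_cnj[OF nth[OF e(4)]] by simp
          finally have yb: "y b = \<theta> a * exp (\<i> * of_real t)" .
          have "\<theta> a \<noteq> 0" using nth[OF e(3)] by auto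
          then show ?thesis using ya yb exp_ne1[OF t] by auto
        qed
        ultimately show ?thesis by auto
      next
        case False
        then have ijF: "{i, j} \<in> F" using ij by simp
        then obtain i' j' where "{i, j} = {i', j'}" "i' \<in> {1..N}" "j' \<in> {1..N}"
          using sgF unfolding simple_graph_def by blast
        then have ijN: "i \<in> {1..N}" "j \<in> {1..N}" by (auto simp: doubleton_eq_iff)
        have ne: "\<theta> i \<noteq> \<theta> j" using thF[OF ijF] .
        show ?thesis
        proof (cases "i \<in> B")
          case True
          then have "j \<in> B" using Bcl[OF ijF] by simp
          then have "y i = \<theta> i * c (\<theta>, t)" "y j = \<theta> j * c (\<theta>, t)" using True ijN by (auto simp: y \<Phi>_def)
          moreover have "c (\<theta>, t) \<noteq> 0" using nc1 by auto
          ultimately show ?thesis using ne by simp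
        next
          case False
          then have "j \<notin> B" using Bcl[OF ijF] by simp
          then have "y i = \<theta> i" "y j = \<theta> j" using False ijN by (auto simp: y \<Phi>_def)
          then show ?thesis using ne by simp
        qed
      qed
      show "y \<in> config0 N (insert e F)" unfolding config0_def using yT edge by blast
    qed
    show "config0 N (insert e F) \<subseteq> \<Phi> ` (config0 N F \<times> {0<..<2*pi})"
    proof
      fix \<theta> assume th: "\<theta> \<in> config0 N (insert e F)"
      have thT: "\<theta> \<in> topspace (torus N)" and thE: "\<And>i j. {i, j} \<in> insert e F \<Longrightarrow> \<theta> i \<noteq> \<theta> j"
        using th by (auto simp: config0_def)
      have thF: "\<theta> \<in> config0 N F" using thT thE unfolding config0_def by blast
      have nth: "\<And>k. k \<in> {1..N} \<Longrightarrow> norm (\<theta> k) = 1" using thT by (auto simp: topspace_torus PiE_iff)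
      define t where "t = Arg2pi (\<theta> b * cnj (\<theta> a))"
      have nr: "norm (\<theta> b * cnj (\<theta> a)) = 1" using nth e by (simp add: norm_mult)
      have "\<theta> b \<noteq> \<theta> a" using thE[of b a] e by (simp add: insert_commute)
      then have r1: "\<theta> b * cnj (\<theta> a) \<noteq> 1" using unit_ratio_ne1 nth e by blast
      have t: "0 < t" "t < 2*pi" unfolding t_def using Arg2pi_pos[OF nr r1] Arg2pi by auto
      have et: "exp (\<i> * of_real t) = \<theta> b * cnj (\<theta> a)" unfolding t_def using nr by (rule unit_exp_Arg2pi)
      have "c (\<theta>, t) = (\<theta> a * cnj (\<theta> a)) * cnj (\<theta> b)  * \<theta> b" by (simp add: c_def et mult_ac)
      also have "\<dots> = 1" using unit_cnj[OF nth[OF e(3)]] unit_cnj[OF nth[OF e(4)]] by (simp add: mult_ac)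
      finally have c1: "c (\<theta>, t) = 1" .
      have "\<Phi> (\<theta>, t) = \<theta>"
      proof
        fix k show "\<Phi> (\<theta>, t) k = \<theta> k"
        proof (cases "k \<in> {1..N}")
          case True then show ?thesis using c1 by (simp add: \<Phi>_def)
        next
          case False
          then have "\<theta> k = undefined" using thT by (simp add: topspace_torus PiE_def extensional_def)
          then show ?thesis using False by (auto simp: \<Phi>_def)
        qed
      qed
      then show "\<theta> \<in> \<Phi> ` (config0 N F \<times> {0<..<2*pi})" using thF t by (metis SigmaI greaterThanLessThan_iff image_eqI)
    qed
  qed
  have "connectedin ?Y (config0 N F \<times> {0<..<2*pi})"
    using ih(1) by (simp add: connectedin_Times)
  then have "connectedin (torus N) (\<Phi> ` (config0 N F \<times> {0<..<2*pi}))"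
    by (rule connectedin_continuous_map_image[OF cont])
  moreover have "\<Phi> ` (config0 N F \<times> {0<..<2*pi}) \<noteq> {}" using ih(2) using pi_gt_zero by (simp add: not_le)
  ultimately show ?thesis using img by simp
qed

lemma forest_conn:
  assumes "finite E"
  shows "simple_graph N E \<Longrightarrow> \<not> has_cycle E \<Longrightarrow> connectedin (torus N) (config0 N E) \<and> config0 N E \<noteq> {}"
  using assms
proof (induction E rule: finite_induct)
  case empty
  have eq: "config0 N {} = topspace (torus N)" by (auto simp: config0_def)
  have "(\<lambda>k\<in>{1..N}. 1::complex) \<in> topspace (torus N)" by (simp add: topspace_torus)
  then show ?case using torus_conn eq by (auto simp: connectedin_topspace)
next
  case (insert e F)
  have "simple_graph N F" using insert.prems(1) by (simp add: simple_graph_def)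
  moreover have "\<not> has_cycle F" using insert.prems(2) has_cycle_mono by blast
  ultimately have ih: "connectedin (torus N) (config0 N F)" "config0 N F \<noteq> {}" using insert.IH by auto
  show ?case by (rule forest_step[OF ih insert.prems insert.hyps(2)])
qed

lemma tree_count:
  assumes "N \<ge> 1" and t: "is_tree N E"
  shows "R0 N E = 1"
proof -
  have sg: "simple_graph N E" and nc: "\<not> has_cycle E" using t by (auto simp: is_tree_def)
  have "E \<subseteq> Pow {1..N}" using sg unfolding simple_graph_def by auto
  then have fin: "finite E" by (rule finite_subset) simp
  from forest_conn[OF fin sg nc] have c: "connectedin (torus N) (config0 N E)" "config0 N E \<noteq> {}" by auto
  let ?X = "subtopology (torus N) (config0 N E)"
  have cs: "connected_space ?X" using c(1) by (rule connected_space_subtopology)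
  have ts: "topspace ?X = config0 N E" by (rule topspace_X)
  then have "?X \<noteq> trivial_topology" using c(2) by (metis null_topspace_iff_trivial)
  then have "connected_components_of ?X = {topspace ?X}"
    using connected_components_of_connected_space[OF cs] by simp
  then show ?thesis unfolding R0_def by simp
qed

theorem proposition1:
  shows "(\<forall>N E. N \<ge> 1 \<longrightarrow> is_tree N E \<longrightarrow> R0 N E = 1) \<and>
         (\<forall>N. N \<ge> 3 \<longrightarrow> R0 N (cycle_graph N) = N - 1)"
  using tree_count cycle_count by blast

end
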